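(* Suppose the following hold for some $\epsilon>0$: - (local independences) $Y\perp\!\!\!\perp Z\mid(D,U)$ and $W\perp\!\!\!\perp(D,Z)\mid U$, for conditioning values $d\in\mathcal{D}(\epsilon)$, $z\in\mathcal{Z}(\epsilon)$; - (BRIDGE) there exist bounded functions $h_+,h_-$ such that $E[Y\mid D=d,U]=\int h_+(d-d^*,w)\,\mathrm{d}P(w\mid D=d,U)$ a.s. for all $d\in\mathcal{D}_+(\epsilon)$, and $E[Y\mid D=d,U]=\int h_-(d-d^*,w)\,\mathrm{d}P(w\mid D=d,U)$ a.s. for all $d\in\mathcal{D}_-(\epsilon)$. Let $h_0(t,w)=h_+(t,w)$ for $t>0$ and $h_0(t,w)=h_-(t,w)$ for $t<0$. Then for all $d\in\mathcal{D}(\epsilon)$ and $z\in\mathcal{Z}(\epsilon)$, $$E[Y\mid D=d,Z=z]=\int h_0(d-d^*,w)\,\mathrm{d}P(w\mid D=d,Z=z).$$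
   Context: $Y\in\mathbb{R}$ is an outcome, $D\in\mathbb{R}$ a running variable with cutoff $d^*$, $Z$ a placebo treatment, $W$ a placebo outcome and $U$ an unobserved confounder, all on one probability space with conditional densities. For $\epsilon>0$: $\mathcal{D}_-(\epsilon)=(d^*-\epsilon,d^* )$, $\mathcal{D}_+(\epsilon)=(d^*,d^*+\epsilon)$ and $\mathcal{D}(\epsilon)=\mathcal{D}_-\cup\mathcal{D}_+$. $\mathcal{Z}(\epsilon)$ is a set with $P(Z\in\mathcal{Z}(\epsilon)\mid D\in\mathcal{D}(\epsilon))=1$. *)

theory Defs
  imports "HOL-Analysis.Analysis"
begin

text \<open>
Setting: the joint law of (Y, D, Z, W, U) has a density f (w.r.t. the product of
lborel for Y, lborel for D, and sigma-finite reference measures MZ, MW, MU for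
Z, W, U).  The argument order of f is (y, d, z, w, u).  All marginal densities
are obtained by integrating f out (nonnegative integrals, so Tonelli is exact),
and conditional densities are ratios of marginal densities.
\<close>

definition dens_YDZU :: "(real \<Rightarrow> real \<Rightarrow> 'z \<Rightarrow> 'w \<Rightarrow> 'u \<Rightarrow> ennreal) \<Rightarrow> 'w measure
    \<Rightarrow> real \<Rightarrow> real \<Rightarrow> 'z \<Rightarrow> 'u \<Rightarrow> ennreal" where
  "dens_YDZU f MW y d z u = (\<integral>\<^sup>+ w. f y d z w u \<partial>MW)"

definition dens_WDZU :: "(real \<Rightarrow> real \<Rightarrow> 'z \<Rightarrow> 'w \<Rightarrow> 'u \<Rightarrow> ennreal)
    \<Rightarrow> 'w \<Rightarrow> real \<Rightarrow> 'z \<Rightarrow> 'u \<Rightarrow> ennreal" where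
  "dens_WDZU f w d z u = (\<integral>\<^sup>+ y. f y d z w u \<partial>lborel)"

definition dens_DZU :: "(real \<Rightarrow> real \<Rightarrow> 'z \<Rightarrow> 'w \<Rightarrow> 'u \<Rightarrow> ennreal) \<Rightarrow> 'w measure
    \<Rightarrow> real \<Rightarrow> 'z \<Rightarrow> 'u \<Rightarrow> ennreal" where
  "dens_DZU f MW d z u = (\<integral>\<^sup>+ y. dens_YDZU f MW y d z u \<partial>lborel)"

definition dens_YDU :: "(real \<Rightarrow> real \<Rightarrow> 'z \<Rightarrow> 'w \<Rightarrow> 'u \<Rightarrow> ennreal) \<Rightarrow> 'z measure \<Rightarrow> 'w measure
    \<Rightarrow> real \<Rightarrow> real \<Rightarrow> 'u \<Rightarrow> ennreal" where
  "dens_YDU f MZ MW y d u = (\<integral>\<^sup>+ z. dens_YDZU f MW y d z u \<partial>MZ)"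

definition dens_DU :: "(real \<Rightarrow> real \<Rightarrow> 'z \<Rightarrow> 'w \<Rightarrow> 'u \<Rightarrow> ennreal) \<Rightarrow> 'z measure \<Rightarrow> 'w measure
    \<Rightarrow> real \<Rightarrow> 'u \<Rightarrow> ennreal" where
  "dens_DU f MZ MW d u = (\<integral>\<^sup>+ z. dens_DZU f MW d z u \<partial>MZ)"

definition dens_WDU :: "(real \<Rightarrow> real \<Rightarrow> 'z \<Rightarrow> 'w \<Rightarrow> 'u \<Rightarrow> ennreal) \<Rightarrow> 'z measure
    \<Rightarrow> 'w \<Rightarrow> real \<Rightarrow> 'u \<Rightarrow> ennreal" where
  "dens_WDU f MZ w d u = (\<integral>\<^sup>+ z. dens_WDZU f w d z u \<partial>MZ)"

definition dens_WU :: "(real \<Rightarrow> real \<Rightarrow> 'z \<Rightarrow> 'w \<Rightarrow> 'u \<Rightarrow> ennreal) \<Rightarrow> 'z measure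
    \<Rightarrow> 'w \<Rightarrow> 'u \<Rightarrow> ennreal" where
  "dens_WU f MZ w u = (\<integral>\<^sup>+ d. dens_WDU f MZ w d u \<partial>lborel)"

definition dens_U :: "(real \<Rightarrow> real \<Rightarrow> 'z \<Rightarrow> 'w \<Rightarrow> 'u \<Rightarrow> ennreal) \<Rightarrow> 'z measure \<Rightarrow> 'w measure
    \<Rightarrow> 'u \<Rightarrow> ennreal" where
  "dens_U f MZ MW u = (\<integral>\<^sup>+ w. dens_WU f MZ w u \<partial>MW)"

definition dens_YDZ :: "(real \<Rightarrow> real \<Rightarrow> 'z \<Rightarrow> 'w \<Rightarrow> 'u \<Rightarrow> ennreal) \<Rightarrow> 'w measure \<Rightarrow> 'u measure
    \<Rightarrow> real \<Rightarrow> real \<Rightarrow> 'z \<Rightarrow> ennreal" where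
  "dens_YDZ f MW MU y d z = (\<integral>\<^sup>+ u. dens_YDZU f MW y d z u \<partial>MU)"

definition dens_WDZ :: "(real \<Rightarrow> real \<Rightarrow> 'z \<Rightarrow> 'w \<Rightarrow> 'u \<Rightarrow> ennreal) \<Rightarrow> 'u measure
    \<Rightarrow> 'w \<Rightarrow> real \<Rightarrow> 'z \<Rightarrow> ennreal" where
  "dens_WDZ f MU w d z = (\<integral>\<^sup>+ u. dens_WDZU f w d z u \<partial>MU)"

definition dens_DZ :: "(real \<Rightarrow> real \<Rightarrow> 'z \<Rightarrow> 'w \<Rightarrow> 'u \<Rightarrow> ennreal) \<Rightarrow> 'w measure \<Rightarrow> 'u measure
    \<Rightarrow> real \<Rightarrow> 'z \<Rightarrow> ennreal" where
  "dens_DZ f MW MU d z = (\<integral>\<^sup>+ u. dens_DZU f MW d z u \<partial>MU)"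

definition cdens_Y_DZU where
  "cdens_Y_DZU f MW y d z u = dens_YDZU f MW y d z u / dens_DZU f MW d z u"

definition cdens_Y_DU where
  "cdens_Y_DU f MZ MW y d u = dens_YDU f MZ MW y d u / dens_DU f MZ MW d u"

definition cdens_W_DZU where
  "cdens_W_DZU f MW w d z u = dens_WDZU f w d z u / dens_DZU f MW d z u"

definition cdens_W_U where
  "cdens_W_U f MZ MW w u = dens_WU f MZ w u / dens_U f MZ MW u"

definition cdens_W_DU where
  "cdens_W_DU f MZ MW w d u = dens_WDU f MZ w d u / dens_DU f MZ MW d u"

definition cdens_Y_DZ where
  "cdens_Y_DZ f MW MU y d z = dens_YDZ f MW MU y d z / dens_DZ f MW MU d z"

definition cdens_W_DZ where
  "cdens_W_DZ f MW MU w d z = dens_WDZ f MU w d z / dens_DZ f MW MU d z"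

definition condE_Y_DZ where
  "condE_Y_DZ f MW MU d z = (\<integral> y. y * enn2real (cdens_Y_DZ f MW MU y d z) \<partial>lborel)"

definition condE_Y_DU where
  "condE_Y_DU f MZ MW d u = (\<integral> y. y * enn2real (cdens_Y_DU f MZ MW y d u) \<partial>lborel)"

definition cint_W_DU :: "('w \<Rightarrow> real) \<Rightarrow> (real \<Rightarrow> real \<Rightarrow> 'z \<Rightarrow> 'w \<Rightarrow> 'u \<Rightarrow> ennreal)
    \<Rightarrow> 'z measure \<Rightarrow> 'w measure \<Rightarrow> real \<Rightarrow> 'u \<Rightarrow> real" where
  "cint_W_DU g f MZ MW d u = (\<integral> w. g w * enn2real (cdens_W_DU f MZ MW w d u) \<partial>MW)"

definition cint_W_DZ :: "('w \<Rightarrow> real) \<Rightarrow> (real \<Rightarrow> real \<Rightarrow> 'z \<Rightarrow> 'w \<Rightarrow> 'u \<Rightarrow> ennreal)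
    \<Rightarrow> 'w measure \<Rightarrow> 'u measure \<Rightarrow> real \<Rightarrow> 'z \<Rightarrow> real" where
  "cint_W_DZ g f MW MU d z = (\<integral> w. g w * enn2real (cdens_W_DZ f MW MU w d z) \<partial>MW)"

definition Y_indep_Z_given_DU where
  "Y_indep_Z_given_DU f MZ MW d z \<longleftrightarrow>
     (\<forall>y u. 0 < dens_DZU f MW d z u \<longrightarrow> cdens_Y_DZU f MW y d z u = cdens_Y_DU f MZ MW y d u)"

definition W_indep_DZ_given_U where
  "W_indep_DZ_given_U f MZ MW d z \<longleftrightarrow>
     (\<forall>w u. 0 < dens_DZU f MW d z u \<longrightarrow> cdens_W_DZU f MW w d z u = cdens_W_U f MZ MW w u)"

definition Dminus :: "real \<Rightarrow> real \<Rightarrow> real set" where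
  "Dminus dstar eps = {dstar - eps <..< dstar}"

definition Dplus :: "real \<Rightarrow> real \<Rightarrow> real set" where
  "Dplus dstar eps = {dstar <..< dstar + eps}"

definition Dwin :: "real \<Rightarrow> real \<Rightarrow> real set" where
  "Dwin dstar eps = Dminus dstar eps \<union> Dplus dstar eps"

text \<open>Glued bridge function h0 (value at t = 0 irrelevant).\<close>

definition h0 :: "(real \<Rightarrow> 'w \<Rightarrow> real) \<Rightarrow> (real \<Rightarrow> 'w \<Rightarrow> real) \<Rightarrow> real \<Rightarrow> 'w \<Rightarrow> real" where
  "h0 hp hm t w = (if t > 0 then hp t w else hm t w)"

end

theory Submission
  imports Defs
begin

lemma fub:
  fixes a :: "'x \<Rightarrow> 'u \<Rightarrow> ennreal" and c :: "'x \<Rightarrow> real"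
  assumes sM: "sigma_finite_measure M" and sN: "sigma_finite_measure N"
   and ma: "(\<lambda>(x,u). a x u) \<in> borel_measurable (M \<Otimes>\<^sub>M N)"
   and mc: "c \<in> borel_measurable M"
   and fin: "(\<integral>\<^sup>+x. ennreal \<bar>c x\<bar> * (\<integral>\<^sup>+u. a x u \<partial>N) \<partial>M) < \<infinity>"
   and fin2: "(\<integral>\<^sup>+x. (\<integral>\<^sup>+u. a x u \<partial>N) \<partial>M) < \<infinity>"
  shows "(\<integral>x. c x * enn2real (\<integral>\<^sup>+u. a x u \<partial>N) \<partial>M)
       = (\<integral>u. (\<integral>x. c x * enn2real (a x u) \<partial>M) \<partial>N)"
proof -
  interpret pair_sigma_finite M N using sM sN by (simp add: pair_sigma_finite_def)
  have mA: "(\<lambda>x. \<integral>\<^sup>+u. a x u \<partial>N) \<in> borel_measurable M"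
    using sigma_finite_measure.borel_measurable_nn_integral[OF sN ma] .
  have AEfin: "AE x in M. (\<integral>\<^sup>+u. a x u \<partial>N) \<noteq> \<infinity>"
    using nn_integral_PInf_AE[OF mA] fin2 by auto
  have ma_x: "(\<lambda>u. a x u) \<in> borel_measurable N" if "x \<in> space M" for x
    using measurable_Pair2[OF ma that] by simp
  have g_meas: "(\<lambda>(x,u). c x * enn2real (a x u)) \<in> borel_measurable (M \<Otimes>\<^sub>M N)"
  proof -
    have "(\<lambda>p. c (fst p) * enn2real ((\<lambda>(x,u). a x u) p)) \<in> borel_measurable (M \<Otimes>\<^sub>M N)"
      by (intro borel_measurable_times measurable_compose[OF measurable_fst mc]
           measurable_compose[OF ma borel_measurable_enn2real]) auto
    then show ?thesis by (simp add: case_prod_beta)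
  qed
  have int: "integrable (M \<Otimes>\<^sub>M N) (\<lambda>(x,u). c x * enn2real (a x u))"
  proof (rule integrableI_bounded[OF g_meas])
    have m2: "(\<lambda>p. ennreal (norm ((\<lambda>(x,u). c x * enn2real (a x u)) p))) \<in> borel_measurable (M \<Otimes>\<^sub>M N)"
      using g_meas by measurable
    have "(\<integral>\<^sup>+p. ennreal (norm ((\<lambda>(x,u). c x * enn2real (a x u)) p)) \<partial>(M \<Otimes>\<^sub>M N))
        = (\<integral>\<^sup>+x. \<integral>\<^sup>+u. ennreal (\<bar>c x\<bar> * enn2real (a x u)) \<partial>N \<partial>M)"
      using sigma_finite_measure.nn_integral_fst[OF sN m2] by (simp add: abs_mult)
    also have "\<dots> \<le> (\<integral>\<^sup>+x. \<integral>\<^sup>+u. ennreal \<bar>c x\<bar> * a x u \<partial>N \<partial>M)"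
    proof (intro nn_integral_mono)
      fix x u
      have "ennreal (\<bar>c x\<bar> * enn2real (a x u)) = ennreal \<bar>c x\<bar> * ennreal (enn2real (a x u))"
        by (simp add: ennreal_mult)
      also have "\<dots> \<le> ennreal \<bar>c x\<bar> * a x u"
        by (intro mult_left_mono) (auto simp: ennreal_enn2real_if)
      finally show "ennreal (\<bar>c x\<bar> * enn2real (a x u)) \<le> ennreal \<bar>c x\<bar> * a x u" .
    qed
    also have "\<dots> = (\<integral>\<^sup>+x. ennreal \<bar>c x\<bar> * (\<integral>\<^sup>+u. a x u \<partial>N) \<partial>M)"
      by (intro nn_integral_cong nn_integral_cmult ma_x)
    finally show "(\<integral>\<^sup>+p. ennreal (norm ((\<lambda>(x,u). c x * enn2real (a x u)) p)) \<partial>(M \<Otimes>\<^sub>M N)) < \<infinity>"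
      using fin by (meson le_less_trans)
  qed
  have F: "(\<integral>u. \<integral>x. c x * enn2real (a x u) \<partial>M \<partial>N) = (\<integral>x. \<integral>u. c x * enn2real (a x u) \<partial>N \<partial>M)"
    by (rule Fubini_integral[OF int])
  have "(\<integral>x. c x * enn2real (\<integral>\<^sup>+u. a x u \<partial>N) \<partial>M) = (\<integral>x. \<integral>u. c x * enn2real (a x u) \<partial>N \<partial>M)"
  proof (rule integral_cong_AE)
    show "(\<lambda>x. c x * enn2real (\<integral>\<^sup>+u. a x u \<partial>N)) \<in> borel_measurable M"
      using mA mc by measurable
    show "(\<lambda>x. \<integral>u. c x * enn2real (a x u) \<partial>N) \<in> borel_measurable M"
      using sigma_finite_measure.borel_measurable_lebesgue_integral[OF sN g_meas] .
    show "AE x in M. c x * enn2real (\<integral>\<^sup>+u. a x u \<partial>N) = (\<integral>u. c x * enn2real (a x u) \<partial>N)"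
      using AEfin AE_space
    proof eventually_elim
      case (elim x)
      have fin_u: "AE u in N. a x u \<noteq> \<infinity>"
        using nn_integral_PInf_AE[OF ma_x[OF elim(2)]] elim(1) by auto
      have "(\<integral>u. enn2real (a x u) \<partial>N) = enn2real (\<integral>\<^sup>+u. ennreal (enn2real (a x u)) \<partial>N)"
        by (rule integral_eq_nn_integral) (use ma_x[OF elim(2)] in auto)
      also have "(\<integral>\<^sup>+u. ennreal (enn2real (a x u)) \<partial>N) = (\<integral>\<^sup>+u. a x u \<partial>N)"
        by (rule nn_integral_cong_AE) (use fin_u in \<open>auto simp: ennreal_enn2real_if\<close>)
      finally show ?case by (simp add: integral_mult_right_zero)
    qed
  qed
  then show ?thesis using F by simp
qed

lemma enn2real_div_pos:
  assumes "p > 0" shows "enn2real (x / ennreal p) = enn2real x / p"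
proof (cases x rule: ennreal_cases)
  case (real r)
  then show ?thesis using assms by (simp add: divide_ennreal)
next
  case top
  then show ?thesis using assms by (simp add: ennreal_top_divide)
qed

lemma enn2real_div_degen:
  assumes "P = 0 \<or> P = \<infinity>" shows "enn2real (x / P) = 0"
  using assms by (auto simp: ennreal_divide_zero ennreal_divide_top)

lemma assemble:
  fixes a :: "real \<Rightarrow> 'u \<Rightarrow> ennreal" and b :: "'w \<Rightarrow> 'u \<Rightarrow> ennreal"
    and q :: "'u \<Rightarrow> ennreal" and h :: "'w \<Rightarrow> real"
  assumes sU: "sigma_finite_measure MU" and sW: "sigma_finite_measure MW"
   and ma: "(\<lambda>(y,u). a y u) \<in> borel_measurable (lborel \<Otimes>\<^sub>M MU)"
   and mb: "(\<lambda>(w,u). b w u) \<in> borel_measurable (MW \<Otimes>\<^sub>M MU)"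
   and mh: "h \<in> borel_measurable MW" and hb: "\<forall>w. \<bar>h w\<bar> \<le> C"
   and qa: "\<forall>u. q u = (\<integral>\<^sup>+y. a y u \<partial>lborel)"
   and qb: "\<forall>u\<in>space MU. q u = (\<integral>\<^sup>+w. b w u \<partial>MW)"
   and star: "AE u in MU. 0 < q u \<and> q u < \<infinity> \<longrightarrow>
       (\<integral>y. y * enn2real (a y u / q u) \<partial>lborel) = (\<integral>w. h w * enn2real (b w u / q u) \<partial>MW)"
   and int: "integrable lborel (\<lambda>y. y * enn2real ((\<integral>\<^sup>+u. a y u \<partial>MU) / (\<integral>\<^sup>+u. q u \<partial>MU)))"
  shows "(\<integral>y. y * enn2real ((\<integral>\<^sup>+u. a y u \<partial>MU) / (\<integral>\<^sup>+u. q u \<partial>MU)) \<partial>lborel)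
       = (\<integral>w. h w * enn2real ((\<integral>\<^sup>+u. b w u \<partial>MU) / (\<integral>\<^sup>+u. q u \<partial>MU)) \<partial>MW)"
proof -
  define P where "P = (\<integral>\<^sup>+u. q u \<partial>MU)"
  define A where "A y = (\<integral>\<^sup>+u. a y u \<partial>MU)" for y
  define B where "B w = (\<integral>\<^sup>+u. b w u \<partial>MU)" for w
  have sL: "sigma_finite_measure lborel" by (rule lborel.sigma_finite_measure_axioms)
  have mA: "A \<in> borel_measurable lborel"
    unfolding A_def using sigma_finite_measure.borel_measurable_nn_integral[OF sU ma] .
  have mB: "B \<in> borel_measurable MW"
    unfolding B_def using sigma_finite_measure.borel_measurable_nn_integral[OF sU mb] .
  have ma_y: "(\<lambda>y. a y u) \<in> borel_measurable lborel" if "u \<in> space MU" for u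
    using measurable_Pair1[OF ma that] by simp
  have mb_w: "(\<lambda>w. b w u) \<in> borel_measurable MW" if "u \<in> space MU" for u
    using measurable_Pair1[OF mb that] by simp
  have PA: "(\<integral>\<^sup>+y. A y \<partial>lborel) = P"
  proof -
    interpret pair_sigma_finite lborel MU using sL sU by (simp add: pair_sigma_finite_def)
    have "(\<integral>\<^sup>+y. A y \<partial>lborel) = (\<integral>\<^sup>+u. \<integral>\<^sup>+y. a y u \<partial>lborel \<partial>MU)"
      unfolding A_def using Fubini'[OF ma] by simp
    also have "\<dots> = P" unfolding P_def using qa by (intro nn_integral_cong) simp
    finally show ?thesis .
  qed
  have PB: "(\<integral>\<^sup>+w. B w \<partial>MW) = P"
  proof -
    interpret pair_sigma_finite MW MU using sW sU by (simp add: pair_sigma_finite_def)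
    have "(\<integral>\<^sup>+w. B w \<partial>MW) = (\<integral>\<^sup>+u. \<integral>\<^sup>+w. b w u \<partial>MW \<partial>MU)"
      unfolding B_def using Fubini'[OF mb] by simp
    also have "\<dots> = P" unfolding P_def using qb by (intro nn_integral_cong) simp
    finally show ?thesis .
  qed
  show ?thesis
  proof (cases "P = 0 \<or> P = \<infinity>")
    case True
    then show ?thesis unfolding P_def[symmetric] by (simp add: enn2real_div_degen)
  next
    case False
    define p where "p = enn2real P"
    have pP: "P = ennreal p" and ppos: "p > 0"
      using False unfolding p_def by (auto simp: less_top enn2real_positive_iff zero_less_iff_neq_zero)
    have LHS: "(\<integral>y. y * enn2real (A y / P) \<partial>lborel) = (\<integral>y. y * enn2real (A y) \<partial>lborel) / p"
    proof -
      have "(\<integral>y. y * enn2real (A y / P) \<partial>lborel) = (\<integral>y. y * enn2real (A y) / p \<partial>lborel)"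
        unfolding pP using ppos by (intro Bochner_Integration.integral_cong refl) (simp add: enn2real_div_pos)
      then show ?thesis by (simp only: integral_divide_zero)
    qed
    have RHS: "(\<integral>w. h w * enn2real (B w / P) \<partial>MW) = (\<integral>w. h w * enn2real (B w) \<partial>MW) / p"
    proof -
      have "(\<integral>w. h w * enn2real (B w / P) \<partial>MW) = (\<integral>w. h w * enn2real (B w) / p \<partial>MW)"
        unfolding pP using ppos by (intro Bochner_Integration.integral_cong refl) (simp add: enn2real_div_pos)
      then show ?thesis by (simp only: integral_divide_zero)
    qed
    have Pfin: "P < \<infinity>" using False by (auto simp: less_top)
    have Cnn: "0 \<le> C" using hb by (meson abs_ge_zero order_trans)
    have intY: "integrable lborel (\<lambda>y. y * enn2real (A y))"
    proof -
      have "integrable lborel (\<lambda>y. p * (y * enn2real (A y / P)))"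
        using int unfolding A_def P_def by (intro integrable_mult_right) 
      moreover have "p * (y * enn2real (A y / P)) = y * enn2real (A y)" for y
        unfolding pP using ppos by (simp add: enn2real_div_pos)
      ultimately show ?thesis by simp
    qed
    have AfinAE: "AE y in lborel. A y \<noteq> \<infinity>"
      using nn_integral_PInf_AE[OF mA] PA Pfin by auto
    have finY: "(\<integral>\<^sup>+y. ennreal \<bar>y\<bar> * (\<integral>\<^sup>+u. a y u \<partial>MU) \<partial>lborel) < \<infinity>"
    proof -
      have "(\<integral>\<^sup>+y. ennreal \<bar>y\<bar> * (\<integral>\<^sup>+u. a y u \<partial>MU) \<partial>lborel)
          = (\<integral>\<^sup>+y. ennreal (norm (y * enn2real (A y))) \<partial>lborel)"
        using AfinAE
        by (intro nn_integral_cong_AE, eventually_elim)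
           (auto simp: A_def abs_mult ennreal_mult ennreal_enn2real_if)
      also have "\<dots> < \<infinity>" using intY by (simp add: integrable_iff_bounded)
      finally show ?thesis .
    qed
    have finW: "(\<integral>\<^sup>+w. ennreal \<bar>h w\<bar> * (\<integral>\<^sup>+u. b w u \<partial>MU) \<partial>MW) < \<infinity>"
    proof -
      have "(\<integral>\<^sup>+w. ennreal \<bar>h w\<bar> * (\<integral>\<^sup>+u. b w u \<partial>MU) \<partial>MW) \<le> (\<integral>\<^sup>+w. ennreal C * B w \<partial>MW)"
        unfolding B_def using hb by (intro nn_integral_mono mult_right_mono ennreal_leI) auto
      also have "\<dots> = ennreal C * P" using mB PB by (simp add: nn_integral_cmult)
      also have "\<dots> < \<infinity>" using Pfin by (simp add: ennreal_mult_less_top)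
      finally show ?thesis .
    qed
    have E1: "(\<integral>y. y * enn2real (A y) \<partial>lborel) = (\<integral>u. (\<integral>y. y * enn2real (a y u) \<partial>lborel) \<partial>MU)"
      unfolding A_def
      by (rule fub[OF sL sU ma _ finY]) (use PA Pfin in \<open>auto simp: A_def\<close>)
    have E2: "(\<integral>w. h w * enn2real (B w) \<partial>MW) = (\<integral>u. (\<integral>w. h w * enn2real (b w u) \<partial>MW) \<partial>MU)"
      unfolding B_def
      by (rule fub[OF sW sU mb mh finW]) (use PB Pfin in \<open>auto simp: B_def\<close>)
    have "(\<integral>u. (\<integral>y. y * enn2real (a y u) \<partial>lborel) \<partial>MU) = (\<integral>u. (\<integral>w. h w * enn2real (b w u) \<partial>MW) \<partial>MU)"
    proof (rule integral_cong_AE)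
      have sw: "(\<lambda>(u,y). a y u) \<in> borel_measurable (MU \<Otimes>\<^sub>M lborel)"
        using measurable_pair_swap[OF ma] by (simp add: case_prod_beta)
      have "(\<lambda>p. snd p * enn2real ((\<lambda>(u,y). a y u) p)) \<in> borel_measurable (MU \<Otimes>\<^sub>M lborel)"
        by (intro borel_measurable_times measurable_compose[OF sw borel_measurable_enn2real]) auto
      then have "(\<lambda>(u,y). y * enn2real (a y u)) \<in> borel_measurable (MU \<Otimes>\<^sub>M lborel)"
        by (simp add: case_prod_beta)
      then show "(\<lambda>u. \<integral>y. y * enn2real (a y u) \<partial>lborel) \<in> borel_measurable MU"
        using sigma_finite_measure.borel_measurable_lebesgue_integral[OF sL] by blast
      have sw2: "(\<lambda>(u,w). b w u) \<in> borel_measurable (MU \<Otimes>\<^sub>M MW)"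
        using measurable_pair_swap[OF mb] by (simp add: case_prod_beta)
      have "(\<lambda>p. h (snd p) * enn2real ((\<lambda>(u,w). b w u) p)) \<in> borel_measurable (MU \<Otimes>\<^sub>M MW)"
        by (intro borel_measurable_times measurable_compose[OF measurable_snd mh]
             measurable_compose[OF sw2 borel_measurable_enn2real]) auto
      then have "(\<lambda>(u,w). h w * enn2real (b w u)) \<in> borel_measurable (MU \<Otimes>\<^sub>M MW)"
        by (simp add: case_prod_beta)
      then show "(\<lambda>u. \<integral>w. h w * enn2real (b w u) \<partial>MW) \<in> borel_measurable MU"
        using sigma_finite_measure.borel_measurable_lebesgue_integral[OF sW] by blast
      have mq: "q \<in> borel_measurable MU"
      proof -
        have "(\<lambda>u. \<integral>\<^sup>+y. a y u \<partial>lborel) \<in> borel_measurable MU"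
          using measurable_pair_swap[OF ma]
          by (intro sigma_finite_measure.borel_measurable_nn_integral[OF sL]) (simp add: case_prod_beta)
        moreover have "q = (\<lambda>u. \<integral>\<^sup>+y. a y u \<partial>lborel)" using qa by auto
        ultimately show ?thesis by simp
      qed
      have qfin: "AE u in MU. q u \<noteq> \<infinity>"
        using nn_integral_PInf_AE[OF mq] Pfin unfolding P_def by auto
      show "AE u in MU. (\<integral>y. y * enn2real (a y u) \<partial>lborel) = (\<integral>w. h w * enn2real (b w u) \<partial>MW)"
        using star qfin AE_space
      proof eventually_elim
        case (elim u)
        show ?case
        proof (cases "q u = 0")
          case True
          have "AE y in lborel. a y u = 0"
            using True qa nn_integral_0_iff_AE[OF ma_y[OF elim(3)]] by simp
          then have 1: "(\<integral>y. y * enn2real (a y u) \<partial>lborel) = 0"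
            by (intro integral_eq_zero_AE) auto
          have "AE w in MW. b w u = 0"
            using True qb elim(3) nn_integral_0_iff_AE[OF mb_w[OF elim(3)]] by simp
          then have 2: "(\<integral>w. h w * enn2real (b w u) \<partial>MW) = 0"
            by (intro integral_eq_zero_AE) auto
          show ?thesis using 1 2 by simp
        next
          case False
          define r where "r = enn2real (q u)"
          have qr: "q u = ennreal r" and rpos: "r > 0"
            using False elim(2) unfolding r_def
            by (auto simp: less_top enn2real_positive_iff zero_less_iff_neq_zero)
          have "(\<integral>y. y * enn2real (a y u / q u) \<partial>lborel) = (\<integral>w. h w * enn2real (b w u / q u) \<partial>MW)"
            using elim(1) qr rpos by simp
          then have "(\<integral>y. y * enn2real (a y u) / r \<partial>lborel) = (\<integral>w. h w * enn2real (b w u) / r \<partial>MW)"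
            unfolding qr using rpos by (simp add: enn2real_div_pos)
          then have "(\<integral>y. y * enn2real (a y u) \<partial>lborel) / r = (\<integral>w. h w * enn2real (b w u) \<partial>MW) / r"
            by (simp only: integral_divide_zero)
          then show ?thesis using rpos by simp
        qed
      qed
    qed
    then have key: "(\<integral>y. y * enn2real (A y) \<partial>lborel) = (\<integral>w. h w * enn2real (B w) \<partial>MW)"
      using E1 E2 by simp
    show ?thesis using LHS RHS key unfolding A_def B_def P_def by simp
  qed
qed


lemma Fsec:
  fixes f :: "real \<Rightarrow> real \<Rightarrow> 'z \<Rightarrow> 'w \<Rightarrow> 'u \<Rightarrow> ennreal"
  assumes f_meas: "(\<lambda>(y, d, z, w, u). f y d z w u)
                   \<in> borel_measurable (lborel \<Otimes>\<^sub>M (lborel \<Otimes>\<^sub>M (MZ \<Otimes>\<^sub>M (MW \<Otimes>\<^sub>M MU))))"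
  and "Y \<in> borel_measurable N" "D \<in> borel_measurable N" "Z \<in> measurable N MZ"
      "W \<in> measurable N MW" "U \<in> measurable N MU"
  shows "(\<lambda>x. f (Y x) (D x) (Z x) (W x) (U x)) \<in> borel_measurable N"
proof -
  have "(\<lambda>x. (Y x, D x, Z x, W x, U x)) \<in> measurable N (lborel \<Otimes>\<^sub>M (lborel \<Otimes>\<^sub>M (MZ \<Otimes>\<^sub>M (MW \<Otimes>\<^sub>M MU))))"
    using assms(2-) by (intro measurable_Pair) auto
  from measurable_compose[OF this f_meas] show ?thesis by simp
qed

lemma meas_div_const:
  assumes "g \<in> borel_measurable M" shows "(\<lambda>x. g x / (c::ennreal)) \<in> borel_measurable M"
  using assms by measurable

context
  fixes f :: "real \<Rightarrow> real \<Rightarrow> 'z \<Rightarrow> 'w \<Rightarrow> 'u \<Rightarrow> ennreal"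
    and MZ :: "'z measure" and MW :: "'w measure" and MU :: "'u measure"
  assumes sfZ: "sigma_finite_measure MZ"
    and sfW: "sigma_finite_measure MW"
    and sfU: "sigma_finite_measure MU"
    and f_meas: "(\<lambda>(y, d, z, w, u). f y d z w u)
                   \<in> borel_measurable (lborel \<Otimes>\<^sub>M (lborel \<Otimes>\<^sub>M (MZ \<Otimes>\<^sub>M (MW \<Otimes>\<^sub>M MU))))"
begin

lemma meas_a:
  assumes z: "z \<in> space MZ"
  shows "(\<lambda>(y,u). dens_YDZU f MW y d z u) \<in> borel_measurable (lborel \<Otimes>\<^sub>M MU)"
proof -
  have "(\<lambda>x. f (fst (fst x)) d z (snd x) (snd (fst x))) \<in> borel_measurable ((lborel \<Otimes>\<^sub>M MU) \<Otimes>\<^sub>M MW)"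
    by (rule Fsec[OF f_meas]) (use z in auto)
  then have "(\<lambda>(p,w). (\<lambda>(y,u). f y d z w u) p) \<in> borel_measurable ((lborel \<Otimes>\<^sub>M MU) \<Otimes>\<^sub>M MW)"
    by (simp add: case_prod_beta)
  from sigma_finite_measure.borel_measurable_nn_integral[OF sfW this]
  show ?thesis unfolding dens_YDZU_def by (simp add: case_prod_beta)
qed

lemma meas_b:
  assumes z: "z \<in> space MZ"
  shows "(\<lambda>(w,u). dens_WDZU f w d z u) \<in> borel_measurable (MW \<Otimes>\<^sub>M MU)"
proof -
  have "(\<lambda>x. f (snd x) d z (fst (fst x)) (snd (fst x))) \<in> borel_measurable ((MW \<Otimes>\<^sub>M MU) \<Otimes>\<^sub>M lborel)"
    by (rule Fsec[OF f_meas]) (use z in auto)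
  then have "(\<lambda>(p,y). (\<lambda>(w,u). f y d z w u) p) \<in> borel_measurable ((MW \<Otimes>\<^sub>M MU) \<Otimes>\<^sub>M lborel)"
    by (simp add: case_prod_beta)
  from sigma_finite_measure.borel_measurable_nn_integral[OF lborel.sigma_finite_measure_axioms this]
  show ?thesis unfolding dens_WDZU_def by (simp add: case_prod_beta)
qed

lemma q_eq_b:
  assumes z: "z \<in> space MZ" and u: "u \<in> space MU"
  shows "dens_DZU f MW d z u = (\<integral>\<^sup>+w. dens_WDZU f w d z u \<partial>MW)"
proof -
  interpret pair_sigma_finite lborel MW
    using sfW by (simp add: pair_sigma_finite_def lborel.sigma_finite_measure_axioms)
  have "(\<lambda>x. f (fst x) d z (snd x) u) \<in> borel_measurable (lborel \<Otimes>\<^sub>M MW)"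
    by (rule Fsec[OF f_meas]) (use z u in auto)
  then have m: "(\<lambda>(y,w). f y d z w u) \<in> borel_measurable (lborel \<Otimes>\<^sub>M MW)"
    by (simp add: case_prod_beta)
  show ?thesis
    unfolding dens_DZU_def dens_YDZU_def dens_WDZU_def using Fubini'[OF m] by simp
qed

lemma meas_qzu:
  shows "(\<lambda>(z,u). dens_DZU f MW d z u) \<in> borel_measurable (MZ \<Otimes>\<^sub>M MU)"
proof -
  have "(\<lambda>x. f (snd (fst x)) d (fst (fst (fst x))) (snd x) (snd (fst (fst x))))
      \<in> borel_measurable (((MZ \<Otimes>\<^sub>M MU) \<Otimes>\<^sub>M lborel) \<Otimes>\<^sub>M MW)"
    by (rule Fsec[OF f_meas]) auto
  then have "(\<lambda>(p,w). (\<lambda>((z,u),y). f y d z w u) p) \<in> borel_measurable (((MZ \<Otimes>\<^sub>M MU) \<Otimes>\<^sub>M lborel) \<Otimes>\<^sub>M MW)"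
    by (simp add: case_prod_beta)
  from sigma_finite_measure.borel_measurable_nn_integral[OF sfW this]
  have "(\<lambda>x. dens_YDZU f MW (snd x) d (fst (fst x)) (snd (fst x))) \<in> borel_measurable ((MZ \<Otimes>\<^sub>M MU) \<Otimes>\<^sub>M lborel)"
    unfolding dens_YDZU_def by (simp add: case_prod_beta)
  then have "(\<lambda>(p,y). (\<lambda>(z,u). dens_YDZU f MW y d z u) p) \<in> borel_measurable ((MZ \<Otimes>\<^sub>M MU) \<Otimes>\<^sub>M lborel)"
    by (simp add: case_prod_beta)
  from sigma_finite_measure.borel_measurable_nn_integral[OF lborel.sigma_finite_measure_axioms this]
  show ?thesis unfolding dens_DZU_def by (simp add: case_prod_beta)
qed

lemma meas_bzw:
  assumes u: "u \<in> space MU"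
  shows "(\<lambda>(z,w). dens_WDZU f w d z u) \<in> borel_measurable (MZ \<Otimes>\<^sub>M MW)"
proof -
  have "(\<lambda>x. f (snd x) d (fst (fst x)) (snd (fst x)) u) \<in> borel_measurable ((MZ \<Otimes>\<^sub>M MW) \<Otimes>\<^sub>M lborel)"
    by (rule Fsec[OF f_meas]) (use u in auto)
  then have "(\<lambda>(p,y). (\<lambda>(z,w). f y d z w u) p) \<in> borel_measurable ((MZ \<Otimes>\<^sub>M MW) \<Otimes>\<^sub>M lborel)"
    by (simp add: case_prod_beta)
  from sigma_finite_measure.borel_measurable_nn_integral[OF lborel.sigma_finite_measure_axioms this]
  show ?thesis unfolding dens_WDZU_def by (simp add: case_prod_beta)
qed

lemma goodAE:
  assumes Zs: "Zeps \<in> sets MZ"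
   and full: "(\<integral>\<^sup>+z. dens_DZ f MW MU d z * indicator (space MZ - Zeps) z \<partial>MZ) = 0"
  shows "AE u in MU. AE z in MZ. z \<in> Zeps \<or> dens_DZU f MW d z u = 0"
proof -
  interpret pair_sigma_finite MZ MU using sfZ sfU by (simp add: pair_sigma_finite_def)
  have mq: "(\<lambda>(z,u). dens_DZU f MW d z u) \<in> borel_measurable (MZ \<Otimes>\<^sub>M MU)" by (rule meas_qzu)
  have mDZ: "(\<lambda>z. dens_DZ f MW MU d z) \<in> borel_measurable MZ"
    unfolding dens_DZ_def using sigma_finite_measure.borel_measurable_nn_integral[OF sfU mq] .
  have mq_z: "(\<lambda>u. dens_DZU f MW d z u) \<in> borel_measurable MU" if "z \<in> space MZ" for z
    using measurable_Pair2[OF mq that] by simp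
  have "(\<lambda>z. dens_DZ f MW MU d z * indicator (space MZ - Zeps) z) \<in> borel_measurable MZ"
    using mDZ Zs by measurable
  then have "AE z in MZ. dens_DZ f MW MU d z * indicator (space MZ - Zeps) z = 0"
    using full nn_integral_0_iff_AE by blast
  then have A1: "AE z in MZ. AE u in MU. z \<in> Zeps \<or> dens_DZU f MW d z u = 0"
    using AE_space
  proof eventually_elim
    case (elim z)
    show ?case
    proof (cases "z \<in> Zeps")
      case True then show ?thesis by simp
    next
      case False
      then have "dens_DZ f MW MU d z = 0" using elim by (simp add: indicator_def)
      then have "AE u in MU. dens_DZU f MW d z u = 0"
        unfolding dens_DZ_def using nn_integral_0_iff_AE[OF mq_z[OF elim(2)]] by simp
      then show ?thesis by (rule eventually_mono) simp
    qed
  qed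
  have "(\<lambda>x. dens_DZU f MW d (fst x) (snd x)) \<in> borel_measurable (MZ \<Otimes>\<^sub>M MU)"
    using mq by (simp add: case_prod_beta)
  then have setm: "{x \<in> space (MZ \<Otimes>\<^sub>M MU). fst x \<in> Zeps \<or> dens_DZU f MW d (fst x) (snd x) = 0} \<in> sets (MZ \<Otimes>\<^sub>M MU)"
    using Zs by measurable
  show ?thesis using AE_commute[OF setm] A1 by simp
qed

lemma Wkey:
  assumes u: "u \<in> space MU" and Zs: "Zeps \<in> sets MZ" and z0: "z0 \<in> Zeps"
   and good: "AE z in MZ. z \<in> Zeps \<or> dens_DZU f MW d z u = 0"
   and qpos: "0 < dens_DZU f MW d z0 u" and qfin: "dens_DZU f MW d z0 u < \<infinity>"
   and iY: "Y_indep_Z_given_DU f MZ MW d z0"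
   and iW: "\<forall>z\<in>Zeps. W_indep_DZ_given_U f MZ MW d z"
  shows "0 < dens_DU f MZ MW d u \<and>
    (AE w in MW. cdens_W_DU f MZ MW w d u = dens_WDZU f w d z0 u / dens_DZU f MW d z0 u)"
proof -
  have Zsp: "Zeps \<subseteq> space MZ" using Zs sets.sets_into_space by blast
  have z0sp: "z0 \<in> space MZ" using z0 Zsp by blast
  define q where "q z = dens_DZU f MW d z u" for z
  define bz where "bz z w = dens_WDZU f w d z u" for z w
  define c where "c w = bz z0 w / q z0" for w
  define pDU where "pDU = dens_DU f MZ MW d u"
  have ma0: "(\<lambda>y. dens_YDZU f MW y d z0 u) \<in> borel_measurable lborel"
    using measurable_Pair1[OF meas_a[OF z0sp] u] by simp
  have cYeq: "\<forall>y. cdens_Y_DU f MZ MW y d u = dens_YDZU f MW y d z0 u / q z0"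
    using iY qpos unfolding Y_indep_Z_given_DU_def cdens_Y_DZU_def q_def by auto
  have q0ne: "q z0 \<noteq> 0" "q z0 \<noteq> \<infinity>" using qpos qfin unfolding q_def by auto
  have int1: "(\<integral>\<^sup>+y. dens_YDZU f MW y d z0 u / q z0 \<partial>lborel) = 1"
    using nn_integral_divide[OF ma0, of "q z0"] q0ne
    by (simp add: q_def dens_DZU_def ennreal_divide_self less_top)
  have pDU_ne0: "pDU \<noteq> 0"
  proof
    assume p0: "pDU = 0"
    have eq: "dens_YDZU f MW y d z0 u / q z0 = \<infinity> * (dens_YDZU f MW y d z0 u / q z0)" for y
      using cYeq[rule_format, of y, symmetric] p0 unfolding cdens_Y_DU_def pDU_def
      by (auto simp: ennreal_divide_zero)
    have "(\<integral>\<^sup>+y. dens_YDZU f MW y d z0 u / q z0 \<partial>lborel)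
        = (\<integral>\<^sup>+y. \<infinity> * (dens_YDZU f MW y d z0 u / q z0) \<partial>lborel)"
      using eq by simp
    also have "\<dots> = \<infinity> * (\<integral>\<^sup>+y. dens_YDZU f MW y d z0 u / q z0 \<partial>lborel)"
      using ma0 by (intro nn_integral_cmult meas_div_const)
    finally show False using int1 by simp
  qed
  have pDU_fin: "pDU \<noteq> \<infinity>"
  proof
    assume pinf: "pDU = \<infinity>"
    have "dens_YDZU f MW y d z0 u / q z0 = 0" for y
      using cYeq[rule_format, of y, symmetric] pinf unfolding cdens_Y_DU_def pDU_def
      by (simp add: ennreal_divide_top)
    then have "(\<integral>\<^sup>+y. dens_YDZU f MW y d z0 u / q z0 \<partial>lborel) = 0" by (simp del: ennreal_divide_eq_0_iff)
    then show False using int1 by simp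
  qed
  have iW': "bz z w / q z = cdens_W_U f MZ MW w u" if "z \<in> Zeps" "0 < q z" for z w
    using iW that unfolding W_indep_DZ_given_U_def cdens_W_DZU_def bz_def q_def by auto
  have cc: "c w = cdens_W_U f MZ MW w u" for w
    unfolding c_def using iW'[OF z0] qpos q_def by auto
  have mb: "(\<lambda>w. bz z w) \<in> borel_measurable MW" if "z \<in> space MZ" for z
    using measurable_Pair1[OF meas_b[OF that] u] unfolding bz_def by simp
  have bq: "q z = (\<integral>\<^sup>+w. bz z w \<partial>MW)" if "z \<in> space MZ" for z
    unfolding q_def bz_def using q_eq_b[OF that u] .
  have intc: "(\<integral>\<^sup>+w. c w \<partial>MW) = 1"
    unfolding c_def using nn_integral_divide[OF mb[OF z0sp], of "q z0"] q0ne bq[OF z0sp]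
    by (simp add: ennreal_divide_self less_top)
  have qfin_all: "q z < \<infinity>" if "z \<in> Zeps" "0 < q z" for z
  proof (rule ccontr)
    assume "\<not> q z < \<infinity>"
    then have "q z = \<infinity>" by (simp add: less_top[symmetric])
    then have "c w = 0" for w using cc iW'[OF that] by (simp add: ennreal_divide_top)
    then show False using intc by simp
  qed
  have bzeq: "bz z w = c w * q z" if "z \<in> Zeps" "0 < q z" for z w
  proof -
    have "c w * q z = bz z w / q z * q z" using cc iW'[OF that] by simp
    also have "\<dots> = bz z w" using that qfin_all[OF that]
      by (simp add: ennreal_divide_times ennreal_divide_self less_top)
    finally show ?thesis by simp
  qed
  have mc: "c \<in> borel_measurable MW" unfolding c_def using mb[OF z0sp] by (rule meas_div_const)
  have mq: "q \<in> borel_measurable MZ"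
    using measurable_Pair1[OF meas_qzu u] unfolding q_def by simp
  have AEzw: "AE z in MZ. AE w in MW. bz z w = c w * q z"
    using good AE_space
  proof eventually_elim
    case (elim z)
    show ?case
    proof (cases "q z = 0")
      case True
      then have "AE w in MW. bz z w = 0"
        using bq[OF elim(2)] nn_integral_0_iff_AE[OF mb[OF elim(2)]] by simp
      then show ?thesis by (rule eventually_mono) (simp add: True)
    next
      case False
      then have "z \<in> Zeps" "0 < q z" using elim(1) unfolding q_def by (auto simp: zero_less_iff_neq_zero)
      then show ?thesis using bzeq by simp
    qed
  qed
  have mbzw: "(\<lambda>x. bz (fst x) (snd x)) \<in> borel_measurable (MZ \<Otimes>\<^sub>M MW)"
    using meas_bzw[OF u] unfolding bz_def by (simp add: case_prod_beta)
  have mcq: "(\<lambda>x. c (snd x) * q (fst x)) \<in> borel_measurable (MZ \<Otimes>\<^sub>M MW)"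
    using mc mq by measurable
  have setm: "{x \<in> space (MZ \<Otimes>\<^sub>M MW). bz (fst x) (snd x) = c (snd x) * q (fst x)} \<in> sets (MZ \<Otimes>\<^sub>M MW)"
    by (rule measurable_equality_set[OF mbzw mcq])
  interpret pair_sigma_finite MZ MW using sfZ sfW by (simp add: pair_sigma_finite_def)
  have AEwz: "AE w in MW. AE z in MZ. bz z w = c w * q z"
    using AE_commute[OF setm] AEzw by simp
  have "AE w in MW. cdens_W_DU f MZ MW w d u = c w"
    using AEwz
  proof eventually_elim
    case (elim w)
    have "dens_WDU f MZ w d u = (\<integral>\<^sup>+z. bz z w \<partial>MZ)"
      unfolding dens_WDU_def bz_def ..
    also have "\<dots> = (\<integral>\<^sup>+z. c w * q z \<partial>MZ)"
      by (rule nn_integral_cong_AE) (use elim in simp)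
    also have "\<dots> = c w * pDU"
      using nn_integral_cmult[OF mq, of "c w"] unfolding pDU_def dens_DU_def q_def by simp
    finally show ?case
      unfolding cdens_W_DU_def pDU_def[symmetric] using pDU_ne0 pDU_fin
      by (simp add: ennreal_mult_divide_eq)
  qed
  then show ?thesis
    using pDU_ne0 unfolding pDU_def c_def bz_def q_def by (simp add: zero_less_iff_neq_zero)
qed

end

theorem lemma3:
  fixes f :: "real \<Rightarrow> real \<Rightarrow> 'z \<Rightarrow> 'w \<Rightarrow> 'u \<Rightarrow> ennreal"
    and MZ :: "'z measure" and MW :: "'w measure" and MU :: "'u measure"
    and dstar eps :: real and Zeps :: "'z set"
    and hp hm :: "real \<Rightarrow> 'w \<Rightarrow> real"
  assumes sfZ: "sigma_finite_measure MZ"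
    and sfW: "sigma_finite_measure MW"
    and sfU: "sigma_finite_measure MU"
    and f_meas: "(\<lambda>(y, d, z, w, u). f y d z w u)
                   \<in> borel_measurable (lborel \<Otimes>\<^sub>M (lborel \<Otimes>\<^sub>M (MZ \<Otimes>\<^sub>M (MW \<Otimes>\<^sub>M MU))))"
    and f_prob: "(\<integral>\<^sup>+ x. (\<lambda>(y, d, z, w, u). f y d z w u) x
                   \<partial>(lborel \<Otimes>\<^sub>M (lborel \<Otimes>\<^sub>M (MZ \<Otimes>\<^sub>M (MW \<Otimes>\<^sub>M MU))))) = 1"
    and eps_pos: "eps > 0"
    and Zeps_sets: "Zeps \<in> sets MZ"
    and Zeps_full: "\<forall>d \<in> Dwin dstar eps.
                      (\<integral>\<^sup>+ z. dens_DZ f MW MU d z * indicator (space MZ - Zeps) z \<partial>MZ) = 0"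
    and indepY: "\<forall>d \<in> Dwin dstar eps. \<forall>z \<in> Zeps. Y_indep_Z_given_DU f MZ MW d z"
    and indepW: "\<forall>d \<in> Dwin dstar eps. \<forall>z \<in> Zeps. W_indep_DZ_given_U f MZ MW d z"
    and hp_meas: "(\<lambda>(t, w). hp t w) \<in> borel_measurable (borel \<Otimes>\<^sub>M MW)"
    and hm_meas: "(\<lambda>(t, w). hm t w) \<in> borel_measurable (borel \<Otimes>\<^sub>M MW)"
    and hp_bdd: "\<exists>B. \<forall>t w. \<bar>hp t w\<bar> \<le> B"
    and hm_bdd: "\<exists>B. \<forall>t w. \<bar>hm t w\<bar> \<le> B"
    and bridge_p: "\<forall>d \<in> Dplus dstar eps. AE u in MU. 0 < dens_DU f MZ MW d u \<longrightarrow>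
                     condE_Y_DU f MZ MW d u = cint_W_DU (hp (d - dstar)) f MZ MW d u"
    and bridge_m: "\<forall>d \<in> Dminus dstar eps. AE u in MU. 0 < dens_DU f MZ MW d u \<longrightarrow>
                     condE_Y_DU f MZ MW d u = cint_W_DU (hm (d - dstar)) f MZ MW d u"
    and Y_integrable: "\<forall>d \<in> Dwin dstar eps. \<forall>z \<in> Zeps.
                     integrable lborel (\<lambda>y. y * enn2real (cdens_Y_DZ f MW MU y d z))"
  shows "\<forall>d \<in> Dwin dstar eps. \<forall>z \<in> Zeps.
           condE_Y_DZ f MW MU d z = cint_W_DZ (h0 hp hm (d - dstar)) f MW MU d z"
proof (intro ballI)
  fix d z assume d: "d \<in> Dwin dstar eps" and z: "z \<in> Zeps"
  have Zsp: "Zeps \<subseteq> space MZ" using Zeps_sets sets.sets_into_space by blast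
  have zsp: "z \<in> space MZ" using z Zsp by blast
  define h where "h = h0 hp hm (d - dstar)"
  obtain Bp where Bp: "\<forall>t w. \<bar>hp t w\<bar> \<le> Bp" using hp_bdd by blast
  obtain Bm where Bm: "\<forall>t w. \<bar>hm t w\<bar> \<le> Bm" using hm_bdd by blast
  have hb: "\<forall>w. \<bar>h w\<bar> \<le> max Bp Bm"
    using Bp Bm by (auto simp: h_def h0_def le_max_iff_disj)
  have mhp: "(\<lambda>w. hp (d - dstar) w) \<in> borel_measurable MW"
    using measurable_Pair2[OF hp_meas, of "d - dstar"] by simp
  have mhm: "(\<lambda>w. hm (d - dstar) w) \<in> borel_measurable MW"
    using measurable_Pair2[OF hm_meas, of "d - dstar"] by simp
  have mh: "h \<in> borel_measurable MW"
    using mhp mhm by (cases "d - dstar > 0") (auto simp: h_def h0_def[abs_def])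
  have bridge: "AE u in MU. 0 < dens_DU f MZ MW d u \<longrightarrow>
                     condE_Y_DU f MZ MW d u = cint_W_DU h f MZ MW d u"
  proof (cases "d \<in> Dplus dstar eps")
    case True
    then have "d - dstar > 0" by (simp add: Dplus_def)
    then have "h = hp (d - dstar)" by (simp add: h_def h0_def[abs_def])
    then show ?thesis using bridge_p True by simp
  next
    case False
    then have dm: "d \<in> Dminus dstar eps" using d by (simp add: Dwin_def)
    then have "\<not> d - dstar > 0" by (simp add: Dminus_def)
    then have "h = hm (d - dstar)" by (simp add: h_def h0_def[abs_def])
    then show ?thesis using bridge_m dm by simp
  qed
  have good: "AE u in MU. AE z in MZ. z \<in> Zeps \<or> dens_DZU f MW d z u = 0"
    using goodAE[OF sfZ sfW sfU f_meas Zeps_sets Zeps_full[rule_format, OF d]] .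
  have iY: "Y_indep_Z_given_DU f MZ MW d z" using indepY d z by blast
  have iW: "\<forall>z\<in>Zeps. W_indep_DZ_given_U f MZ MW d z" using indepW d by blast
  show "condE_Y_DZ f MW MU d z = cint_W_DZ (h0 hp hm (d - dstar)) f MW MU d z"
    unfolding h_def[symmetric] condE_Y_DZ_def cint_W_DZ_def cdens_Y_DZ_def cdens_W_DZ_def
      dens_YDZ_def dens_DZ_def dens_WDZ_def
  proof (rule assemble[OF sfU sfW meas_a[OF sfZ sfW sfU f_meas zsp] meas_b[OF sfZ sfW sfU f_meas zsp] mh hb])
    show "\<forall>u. dens_DZU f MW d z u = (\<integral>\<^sup>+y. dens_YDZU f MW y d z u \<partial>lborel)"
      by (simp add: dens_DZU_def)
    show "\<forall>u\<in>space MU. dens_DZU f MW d z u = (\<integral>\<^sup>+w. dens_WDZU f w d z u \<partial>MW)"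
      using q_eq_b[OF sfZ sfW sfU f_meas zsp] by blast
    show "integrable lborel (\<lambda>y. y * enn2real ((\<integral>\<^sup>+u. dens_YDZU f MW y d z u \<partial>MU) / (\<integral>\<^sup>+u. dens_DZU f MW d z u \<partial>MU)))"
      using Y_integrable d z unfolding cdens_Y_DZ_def dens_YDZ_def dens_DZ_def by blast
    show "AE u in MU. 0 < dens_DZU f MW d z u \<and> dens_DZU f MW d z u < \<infinity> \<longrightarrow>
       (\<integral>y. y * enn2real (dens_YDZU f MW y d z u / dens_DZU f MW d z u) \<partial>lborel) =
       (\<integral>w. h w * enn2real (dens_WDZU f w d z u / dens_DZU f MW d z u) \<partial>MW)"
      using good bridge AE_space
    proof eventually_elim
      case (elim u)
      show ?case
      proof (intro impI)
        assume qq: "0 < dens_DZU f MW d z u \<and> dens_DZU f MW d z u < \<infinity>"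
        have WK: "0 < dens_DU f MZ MW d u \<and>
          (AE w in MW. cdens_W_DU f MZ MW w d u = dens_WDZU f w d z u / dens_DZU f MW d z u)"
          using Wkey[OF sfZ sfW sfU f_meas elim(3) Zeps_sets z elim(1)] qq iY iW by blast
        have "(\<integral>y. y * enn2real (dens_YDZU f MW y d z u / dens_DZU f MW d z u) \<partial>lborel)
            = condE_Y_DU f MZ MW d u"
          unfolding condE_Y_DU_def
          using iY qq unfolding Y_indep_Z_given_DU_def cdens_Y_DZU_def by simp
        also have "\<dots> = cint_W_DU h f MZ MW d u" using elim(2) WK by blast
        also have "\<dots> = (\<integral>w. h w * enn2real (dens_WDZU f w d z u / dens_DZU f MW d z u) \<partial>MW)"
          unfolding cint_W_DU_def
        proof (rule integral_cong_AE)
          have "(\<lambda>(w,z). dens_WDZU f w d z u) \<in> borel_measurable (MW \<Otimes>\<^sub>M MZ)"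
            using measurable_pair_swap[OF meas_bzw[OF sfZ sfW sfU f_meas elim(3)]]
            by (simp add: case_prod_beta)
          from sigma_finite_measure.borel_measurable_nn_integral[OF sfZ this]
          have "(\<lambda>w. dens_WDU f MZ w d u) \<in> borel_measurable MW"
            unfolding dens_WDU_def by simp
          then have "(\<lambda>w. cdens_W_DU f MZ MW w d u) \<in> borel_measurable MW"
            unfolding cdens_W_DU_def by (rule meas_div_const)
          then show "(\<lambda>w. h w * enn2real (cdens_W_DU f MZ MW w d u)) \<in> borel_measurable MW"
            using mh by measurable
          have "(\<lambda>w. dens_WDZU f w d z u) \<in> borel_measurable MW"
            using measurable_Pair1[OF meas_b[OF sfZ sfW sfU f_meas zsp] elim(3)] by simp
          then have "(\<lambda>w. dens_WDZU f w d z u / dens_DZU f MW d z u) \<in> borel_measurable MW"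
            by (rule meas_div_const)
          then show "(\<lambda>w. h w * enn2real (dens_WDZU f w d z u / dens_DZU f MW d z u)) \<in> borel_measurable MW"
            using mh by measurable
          show "AE w in MW. h w * enn2real (cdens_W_DU f MZ MW w d u) =
              h w * enn2real (dens_WDZU f w d z u / dens_DZU f MW d z u)"
            using WK by (auto elim: eventually_mono)
        qed
        finally show "(\<integral>y. y * enn2real (dens_YDZU f MW y d z u / dens_DZU f MW d z u) \<partial>lborel) =
          (\<integral>w. h w * enn2real (dens_WDZU f w d z u / dens_DZU f MW d z u) \<partial>MW)" .
      qed
    qed
  qed
qed

end
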